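(* Let $R$ be a ring, $n$ a positive integer, $P$ a divided weakly prime ideal of $R$, and $I$ a weakly $n$-absorbing ideal of $R$ with $\sqrt{I}=P$. Then $I$ is a weakly primary ideal of $R$.
   Context: All rings are commutative with $1\neq0$. A proper ideal $P$ is weakly prime if $0\neq ab\in P$ implies $a\in P$ or $b\in P$; a weakly prime ideal $P$ is divided if $P\subset xR$ for every $x\in R\setminus P$. A proper ideal $I$ is weakly primary if $0\neq ab\in I$ implies $a\in I$ or $b\in\sqrt{I}$. A proper ideal $I$ is weakly $n$-absorbing if whenever $0\neq a_1\cdots a_{n+1}\in I$ with $a_1,\dots,a_{n+1}\in R$, there are $n$ of the $a_i$'s whose product is in $I$. *)

theory Defs
  imports Main
begin

definition is_ideal :: "'a::comm_ring_1 set \<Rightarrow> bool" where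
  "is_ideal I \<longleftrightarrow> 0 \<in> I \<and> (\<forall>x\<in>I. \<forall>y\<in>I. x + y \<in> I) \<and> (\<forall>x\<in>I. - x \<in> I)
     \<and> (\<forall>r. \<forall>x\<in>I. r * x \<in> I)"

definition proper_ideal :: "'a::comm_ring_1 set \<Rightarrow> bool" where
  "proper_ideal I \<longleftrightarrow> is_ideal I \<and> I \<noteq> UNIV"

definition rad :: "'a::comm_ring_1 set \<Rightarrow> 'a set" where
  "rad I = {x. \<exists>k::nat. x ^ k \<in> I}"

definition weakly_prime :: "'a::comm_ring_1 set \<Rightarrow> bool" where
  "weakly_prime P \<longleftrightarrow> proper_ideal P \<and>
     (\<forall>a b. a * b \<noteq> 0 \<and> a * b \<in> P \<longrightarrow> a \<in> P \<or> b \<in> P)"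

definition divided_weakly_prime :: "'a::comm_ring_1 set \<Rightarrow> bool" where
  "divided_weakly_prime P \<longleftrightarrow> weakly_prime P \<and>
     (\<forall>x. x \<notin> P \<longrightarrow> P \<subseteq> {x * r | r. True})"

definition weakly_primary :: "'a::comm_ring_1 set \<Rightarrow> bool" where
  "weakly_primary I \<longleftrightarrow> proper_ideal I \<and>
     (\<forall>a b. a * b \<noteq> 0 \<and> a * b \<in> I \<longrightarrow> a \<in> I \<or> b \<in> rad I)"

text \<open>Elements a_0,...,a_n (n+1 of them); some n of them (omit index j) have product in I.\<close>
definition weakly_n_absorbing :: "nat \<Rightarrow> 'a::comm_ring_1 set \<Rightarrow> bool" where
  "weakly_n_absorbing n I \<longleftrightarrow> proper_ideal I \<and>
     (\<forall>a :: nat \<Rightarrow> 'a. (\<Prod>i\<le>n. a i) \<noteq> 0 \<and> (\<Prod>i\<le>n. a i) \<in> I \<longrightarrow>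
        (\<exists>j\<le>n. (\<Prod>i\<in>{..n} - {j}. a i) \<in> I))"

end

theory Submission
  imports Defs
begin

lemma prod_f_all:
  fixes c b :: "'a::comm_ring_1"
  shows "(\<Prod>i\<le>n. (if i = 0 then c else b)) = c * b ^ n"
proof -
  have "{..n} = insert 0 {1..n}" by auto
  hence "(\<Prod>i\<le>n. (if i = 0 then c else b)) = c * (\<Prod>i\<in>{1..n}. (if i = 0 then c else b))"
    by simp
  also have "(\<Prod>i\<in>{1..n}. (if i = 0 then c else b)) = (\<Prod>i\<in>{1..n}. b)"
    by (rule prod.cong) auto
  finally show ?thesis by simp
qed

lemma prod_f_drop0:
  fixes c b :: "'a::comm_ring_1"
  shows "(\<Prod>i\<in>{..n} - {0}. (if i = 0 then c else b)) = b ^ n"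
proof -
  have "{..n} - {0} = {1..n}" by auto
  hence "(\<Prod>i\<in>{..n} - {0}. (if i = 0 then c else b)) = (\<Prod>i\<in>{1..n}. b)"
    by (intro prod.cong) auto
  thus ?thesis by simp
qed

lemma prod_f_dropj:
  fixes c b :: "'a::comm_ring_1"
  assumes "1 \<le> j" "j \<le> n"
  shows "(\<Prod>i\<in>{..n} - {j}. (if i = 0 then c else b)) = c * b ^ (n - 1)"
proof -
  have e: "{..n} - {j} = insert 0 ({1..n} - {j})" using assms by auto
  have "(\<Prod>i\<in>{..n} - {j}. (if i = 0 then c else b)) = c * (\<Prod>i\<in>{1..n} - {j}. (if i = 0 then c else b))"
    unfolding e by simp
  also have "(\<Prod>i\<in>{1..n} - {j}. (if i = 0 then c else b)) = (\<Prod>i\<in>{1..n} - {j}. b)"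
    by (rule prod.cong) auto
  also have "\<dots> = b ^ (n - 1)" using assms by simp
  finally show ?thesis .
qed

theorem mainTheorem16:
  fixes P I :: "'a::comm_ring_1 set" and n :: nat
  assumes "n \<ge> 1"
    and "divided_weakly_prime P"
    and "weakly_n_absorbing n I"
    and "rad I = P"
  shows "weakly_primary I"
  unfolding weakly_primary_def
proof (intro conjI allI impI)
  show pI: "proper_ideal I" using assms(3) unfolding weakly_n_absorbing_def by blast
  fix a b assume ab: "a * b \<noteq> 0 \<and> a * b \<in> I"
  show "a \<in> I \<or> b \<in> rad I"
  proof (cases "b \<in> rad I")
    case True thus ?thesis by simp
  next
    case False
    have wp: "weakly_prime P" and dv: "\<forall>x. x \<notin> P \<longrightarrow> P \<subseteq> {x * r | r. True}"
      using assms(2) unfolding divided_weakly_prime_def by auto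
    have "(a * b) ^ 1 \<in> I" using ab by simp
    hence "a * b \<in> P" using assms(4) unfolding rad_def by blast
    hence aP: "a \<in> P" using wp ab False assms(4) unfolding weakly_prime_def by blast
    have "b ^ (n - 1) \<notin> P"
    proof
      assume "b ^ (n - 1) \<in> P"
      then obtain k where "(b ^ (n - 1)) ^ k \<in> I" using assms(4) unfolding rad_def by auto
      hence "b ^ ((n - 1) * k) \<in> I" by (simp add: power_mult)
      thus False using False unfolding rad_def by auto
    qed
    then obtain c where ac: "a = b ^ (n - 1) * c" using dv aP by blast
    define f where "f = (\<lambda>i::nat. if i = 0 then c else b)"
    have pf: "(\<Prod>i\<le>n. f i) = a * b"
    proof -
      obtain m where m: "n = Suc m" using assms(1) by (cases n) auto
      show ?thesis unfolding f_def prod_f_all ac m by (simp add: algebra_simps)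
    qed
    then obtain j where j: "j \<le> n" "(\<Prod>i\<in>{..n} - {j}. f i) \<in> I"
      using assms(3) ab unfolding weakly_n_absorbing_def by force
    show ?thesis
    proof (cases "j = 0")
      case True
      hence "b ^ n \<in> I" using j unfolding f_def by (simp add: prod_f_drop0)
      thus ?thesis unfolding rad_def by auto
    next
      case False
      hence "c * b ^ (n - 1) \<in> I" using j unfolding f_def by (simp add: prod_f_dropj)
      thus ?thesis using ac by (simp add: mult.commute)
    qed
  qed
qed

end
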